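(* If $\mathcal A(K_n,K_c)\ne0$ and $-1\notin\mathcal A(K_n,K_c)^+$, then $n\le c$.
   Context: $K_c$ is the complete graph on $c$ vertices. With $|I|=n$, $|O|=c$ ($O=\{0,\dots,c-1\}$), let $\mathbb F(n,c)$ be the free product of $n$ copies of the cyclic group of order $c$ with generators $u_v$, $\mathbb C[\mathbb F(n,c)]$ its group $*$-algebra, $\omega=e^{2\pi i/c}$, $e_{v,a}=\frac1c\sum_{k=0}^{c-1}(\omega^{-a}u_v)^k$. $\mathcal I(K_n,K_c)$ is the two-sided $*$-ideal generated by $e_{v,a}e_{v,b}$ ($a\ne b$) and $e_{v,a}e_{w,a}$ ($v\ne w$), and $\mathcal A(K_n,K_c)=\mathbb C[\mathbb F(n,c)]/\mathcal I(K_n,K_c)$. Let $\mathcal P$ be the cone of finite sums of elements $f^*f$, and $\mathcal A(K_n,K_c)^+=\{p+\mathcal I(K_n,K_c):p\in\mathcal P\}$. *)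

theory Defs
  imports Complex_Main
begin

text \<open>Elements of F(n,c) are represented by reduced words: lists of letters (v,k),
  meaning u_v^k, with v < n (v in I = {0..<n}), 0 < k < c, and no two adjacent letters
  with the same v.\<close>

type_synonym word = "(nat \<times> nat) list"

definition reduced :: "nat \<Rightarrow> nat \<Rightarrow> word \<Rightarrow> bool" where
  "reduced n c w \<longleftrightarrow> (\<forall>(v,k)\<in>set w. v < n \<and> 0 < k \<and> k < c) \<and>
     (\<forall>i. Suc i < length w \<longrightarrow> fst (w ! i) \<noteq> fst (w ! Suc i))"

definition push :: "nat \<Rightarrow> nat \<times> nat \<Rightarrow> word \<Rightarrow> word" where
  "push c vk w = (let v = fst vk; k0 = snd vk mod c in
     if k0 = 0 then w else
     (case w of [] \<Rightarrow> [(v, k0)]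
      | (v', k') # rest \<Rightarrow>
          if v' = v then (let s = (k0 + k') mod c in if s = 0 then rest else (v, s) # rest)
          else (v, k0) # w))"

definition mulw :: "nat \<Rightarrow> word \<Rightarrow> word \<Rightarrow> word" where
  "mulw c x y = foldr (push c) x y"

definition invw :: "nat \<Rightarrow> word \<Rightarrow> word" where
  "invw c w = rev (map (\<lambda>(v,k). (v, c - k)) w)"

type_synonym elem = "word \<Rightarrow> complex"

definition GA :: "nat \<Rightarrow> nat \<Rightarrow> elem set" where
  "GA n c = {f. finite {w. f w \<noteq> 0} \<and> (\<forall>w. f w \<noteq> 0 \<longrightarrow> reduced n c w)}"

definition zero_el :: elem where "zero_el = (\<lambda>w. 0)"
definition one_el :: elem where "one_el = (\<lambda>w. if w = [] then 1 else 0)"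
definition add_el :: "elem \<Rightarrow> elem \<Rightarrow> elem" where "add_el f g = (\<lambda>w. f w + g w)"
definition neg_el :: "elem \<Rightarrow> elem" where "neg_el f = (\<lambda>w. - f w)"
definition smul_el :: "complex \<Rightarrow> elem \<Rightarrow> elem" where "smul_el a f = (\<lambda>w. a * f w)"

definition conv :: "nat \<Rightarrow> elem \<Rightarrow> elem \<Rightarrow> elem" where
  "conv c f g = (\<lambda>w. \<Sum>(x,y)\<in>{(x,y). f x \<noteq> 0 \<and> g y \<noteq> 0 \<and> mulw c x y = w}. f x * g y)"

definition star :: "nat \<Rightarrow> elem \<Rightarrow> elem" where
  "star c f = (\<lambda>w. cnj (f (invw c w)))"

definition upow :: "nat \<Rightarrow> nat \<Rightarrow> nat \<Rightarrow> elem" where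
  "upow c v k = (\<lambda>w. if w = push c (v, k) [] then 1 else 0)"

definition omega :: "nat \<Rightarrow> complex" where
  "omega c = exp (2 * of_real pi * \<i> / of_nat c)"

definition eproj :: "nat \<Rightarrow> nat \<Rightarrow> nat \<Rightarrow> elem" where
  "eproj c v a = (\<lambda>w. (1 / of_nat c) * (\<Sum>k<c. (inverse (omega c)) ^ (a * k) * upow c v k w))"

definition gens :: "nat \<Rightarrow> nat \<Rightarrow> elem set" where
  "gens n c =
     {conv c (eproj c v a) (eproj c v b) | v a b. v < n \<and> a < c \<and> b < c \<and> a \<noteq> b} \<union>
     {conv c (eproj c v a) (eproj c w a) | v w a. v < n \<and> w < n \<and> v \<noteq> w \<and> a < c}"

definition is_star_ideal :: "nat \<Rightarrow> nat \<Rightarrow> elem set \<Rightarrow> bool" where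
  "is_star_ideal n c J \<longleftrightarrow> J \<subseteq> GA n c \<and> zero_el \<in> J \<and>
     (\<forall>x\<in>J. \<forall>y\<in>J. add_el x y \<in> J) \<and>
     (\<forall>x\<in>J. \<forall>a. smul_el a x \<in> J) \<and>
     (\<forall>x\<in>J. \<forall>y\<in>GA n c. conv c x y \<in> J \<and> conv c y x \<in> J) \<and>
     (\<forall>x\<in>J. star c x \<in> J)"

definition Ideal :: "nat \<Rightarrow> nat \<Rightarrow> elem set" where
  "Ideal n c = \<Inter>{J. is_star_ideal n c J \<and> gens n c \<subseteq> J}"

text \<open>Class of x in the quotient A(K_n,K_c) = C[F(n,c)] / I(K_n,K_c).\<close>
definition qclass :: "nat \<Rightarrow> nat \<Rightarrow> elem \<Rightarrow> elem set" where
  "qclass n c x = {y \<in> GA n c. add_el y (neg_el x) \<in> Ideal n c}"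

inductive_set Pcone :: "nat \<Rightarrow> nat \<Rightarrow> elem set" for n c where
  Pzero: "zero_el \<in> Pcone n c"
| Padd: "p \<in> Pcone n c \<Longrightarrow> f \<in> GA n c \<Longrightarrow> add_el p (conv c (star c f) f) \<in> Pcone n c"

definition Aplus :: "nat \<Rightarrow> nat \<Rightarrow> elem set set" where
  "Aplus n c = qclass n c ` Pcone n c"

definition A_nonzero :: "nat \<Rightarrow> nat \<Rightarrow> bool" where
  "A_nonzero n c \<longleftrightarrow> (\<exists>x\<in>GA n c. qclass n c x \<noteq> qclass n c zero_el)"

end

theory Submission
  imports Defs "HOL-Analysis.Analysis"
begin

lemma omega_pow_c: "1 \<le> c \<Longrightarrow> omega c ^ c = 1"
proof -
  assume "1 \<le> c"
  have "omega c ^ c = exp (of_nat c * (2 * of_real pi * \<i> / of_nat c))"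
    unfolding omega_def by (rule exp_of_nat_mult[symmetric])
  also have "of_nat c * (2 * of_real pi * \<i> / of_nat c) = 2 * of_real pi * \<i>"
    using \<open>1 \<le> c\<close> by (simp add: field_simps)
  finally show ?thesis by simp
qed

lemma omega_pow_ne1: "0 < k \<Longrightarrow> k < c \<Longrightarrow> omega c ^ k \<noteq> 1"
proof
  assume k: "0 < k" "k < c" and e: "omega c ^ k = 1"
  have "omega c ^ k = exp (of_nat k * (2 * of_real pi * \<i> / of_nat c))"
    unfolding omega_def by (rule exp_of_nat_mult[symmetric])
  with e obtain m :: int where m: "Im (of_nat k * (2 * of_real pi * \<i> / of_nat c)) = of_int (2*m) * pi"
    using exp_eq_1 by metis
  have "Im (of_nat k * (2 * of_real pi * \<i> / of_nat c)) = real k * 2 * pi / real c"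
    by simp
  with m have "real k * 2 * pi / real c = of_int (2*m) * pi" by simp
  hence "real k = real c * of_int m" using k pi_gt_zero by (simp add: field_simps)
  hence "int k = int c * m" by (metis of_int_eq_iff of_int_mult of_int_of_nat_eq)
  show False
  proof (cases "m \<le> 0")
    case True then have "int c * m \<le> 0" by (simp add: mult_nonneg_nonpos)
    then show False using k \<open>int k = int c * m\<close> by simp
  next
    case False then have "int c * m \<ge> int c * 1" by (intro mult_left_mono) auto
    moreover have "int k < int c" using k by simp
    ultimately show False using \<open>int k = int c * m\<close> by linarith
  qed
qed

lemma omega_ne0: "omega c \<noteq> 0" by (simp add: omega_def)

lemma cnj_omega: "cnj (omega c) = inverse (omega c)"
  unfolding omega_def by (simp add: exp_cnj exp_minus[symmetric])

definition dl :: "word \<Rightarrow> elem" where "dl x = (\<lambda>w. if w = x then 1 else 0)"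
definition supp :: "elem \<Rightarrow> word set" where "supp f = {w. f w \<noteq> 0}"

lemma conv_sup:
  assumes "finite A" "finite B" "supp f \<subseteq> A" "supp g \<subseteq> B"
  shows "conv c f g w = (\<Sum>x\<in>A. \<Sum>y\<in>B. if mulw c x y = w then f x * g y else 0)"
proof -
  let ?S = "{(x,y). f x \<noteq> 0 \<and> g y \<noteq> 0 \<and> mulw c x y = w}"
  let ?h = "\<lambda>(x,y). if mulw c x y = w then f x * g y else 0"
  have sub: "?S \<subseteq> A \<times> B" using assms(3,4) unfolding supp_def by auto
  have "conv c f g w = (\<Sum>(x,y)\<in>?S. f x * g y)" unfolding conv_def by simp
  also have "\<dots> = (\<Sum>p\<in>?S. ?h p)" by (rule sum.cong) auto
  also have "\<dots> = (\<Sum>p\<in>A \<times> B. ?h p)"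
    by (rule sum.mono_neutral_left) (use sub assms(1,2) in \<open>auto split: if_splits\<close>)
  also have "\<dots> = (\<Sum>x\<in>A. \<Sum>y\<in>B. ?h (x,y))" by (simp add: sum.cartesian_product)
  finally show ?thesis by simp
qed

lemma supp_sum: "supp (\<lambda>w. \<Sum>i\<in>I. f i w) \<subseteq> (\<Union>i\<in>I. supp (f i))"
  unfolding supp_def by (auto elim: sum.not_neutral_contains_not_neutral)

lemma conv_bilin:
  assumes "finite I" "finite J" "\<And>i. i \<in> I \<Longrightarrow> finite (supp (f i))"
    "\<And>j. j \<in> J \<Longrightarrow> finite (supp (g j))"
  shows "conv c (\<lambda>w. \<Sum>i\<in>I. f i w) (\<lambda>w. \<Sum>j\<in>J. g j w) w
        = (\<Sum>i\<in>I. \<Sum>j\<in>J. conv c (f i) (g j) w)"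
proof -
  define A where "A = (\<Union>i\<in>I. supp (f i))"
  define B where "B = (\<Union>j\<in>J. supp (g j))"
  have fA: "finite A" "finite B" using assms unfolding A_def B_def by auto
  have "conv c (\<lambda>w. \<Sum>i\<in>I. f i w) (\<lambda>w. \<Sum>j\<in>J. g j w) w =
     (\<Sum>x\<in>A. \<Sum>y\<in>B. of_bool (mulw c x y = w) * ((\<Sum>i\<in>I. f i x) * (\<Sum>j\<in>J. g j y)))"
    by (subst conv_sup[OF fA]) (auto simp: A_def B_def supp_sum intro!: sum.cong)
  also have "\<dots> = (\<Sum>x\<in>A. \<Sum>y\<in>B. \<Sum>i\<in>I. \<Sum>j\<in>J. of_bool (mulw c x y = w) * (f i x * g j y))"
    apply (intro sum.cong refl) apply (subst sum_product) by (simp add: sum_distrib_left)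
  also have "\<dots> = (\<Sum>x\<in>A. \<Sum>i\<in>I. \<Sum>y\<in>B. \<Sum>j\<in>J. of_bool (mulw c x y = w) * (f i x * g j y))"
    by (rule sum.cong[OF refl], rule sum.swap)
  also have "\<dots> = (\<Sum>i\<in>I. \<Sum>x\<in>A. \<Sum>y\<in>B. \<Sum>j\<in>J. of_bool (mulw c x y = w) * (f i x * g j y))"
    by (rule sum.swap)
  also have "\<dots> = (\<Sum>i\<in>I. \<Sum>x\<in>A. \<Sum>j\<in>J. \<Sum>y\<in>B. of_bool (mulw c x y = w) * (f i x * g j y))"
    by (rule sum.cong[OF refl], rule sum.cong[OF refl], rule sum.swap)
  also have "\<dots> = (\<Sum>i\<in>I. \<Sum>j\<in>J. \<Sum>x\<in>A. \<Sum>y\<in>B. of_bool (mulw c x y = w) * (f i x * g j y))"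
    by (rule sum.cong[OF refl], rule sum.swap)
  also have "\<dots> = (\<Sum>i\<in>I. \<Sum>j\<in>J. conv c (f i) (g j) w)"
  proof (intro sum.cong refl)
    fix i j assume ij: "i \<in> I" "j \<in> J"
    show "(\<Sum>x\<in>A. \<Sum>y\<in>B. of_bool (mulw c x y = w) * (f i x * g j y)) = conv c (f i) (g j) w"
      by (subst conv_sup[OF fA]) (use ij in \<open>auto simp: A_def B_def intro!: sum.cong\<close>)
  qed
  finally show ?thesis .
qed

lemma conv_scale:
  assumes "finite (supp f)" "finite (supp g)"
  shows "conv c (\<lambda>w. a * f w) (\<lambda>w. b * g w) w = a * b * conv c f g w"
proof -
  have s: "supp (\<lambda>w. a * f w) \<subseteq> supp f" "supp (\<lambda>w. b * g w) \<subseteq> supp g"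
    unfolding supp_def by auto
  show ?thesis
    apply (subst conv_sup[OF assms s])
    apply (subst conv_sup[OF assms order_refl order_refl])
    by (auto simp: sum_distrib_left intro!: sum.cong)
qed

lemma conv_dl: "conv c (dl x) (dl y) = dl (mulw c x y)"
proof
  fix w
  have s: "supp (dl x) \<subseteq> {x}" "supp (dl y) \<subseteq> {y}" unfolding supp_def dl_def by auto
  show "conv c (dl x) (dl y) w = dl (mulw c x y) w"
    by (subst conv_sup[OF _ _ s]) (auto simp: dl_def)
qed

lemma supp_dl: "finite (supp (dl x))"
proof -
  have "supp (dl x) \<subseteq> {x}" unfolding supp_def dl_def by auto
  thus ?thesis by (rule finite_subset) simp
qed

definition pw :: "nat \<Rightarrow> nat \<Rightarrow> nat \<Rightarrow> word" where "pw c v k = push c (v,k) []"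

lemma pw_eq: "pw c v k = (if k mod c = 0 then [] else [(v, k mod c)])"
  by (simp add: pw_def push_def Let_def)

lemma mulw_nil: "mulw c [] y = y" by (simp add: mulw_def)

lemma mulw_pw: "mulw c (pw c v j) y = push c (v,j) y"
  by (simp add: pw_eq mulw_def push_def Let_def)

lemma push_pw: "push c (v,j) (pw c v k) = pw c v (j+k)"
proof (cases "j mod c = 0")
  case True
  have "(j + k) mod c = k mod c" using True by (metis mod_add_left_eq add_0)
  thus ?thesis using True by (simp add: pw_eq push_def Let_def)
next
  case F1: False
  show ?thesis
  proof (cases "k mod c = 0")
    case True
    have "(j + k) mod c = j mod c" using True by (metis mod_add_right_eq add_0_right)
    thus ?thesis using True F1 by (simp add: pw_eq push_def Let_def)
  next
    case False
    have "(j mod c + k mod c) mod c = (j + k) mod c" by (rule mod_add_eq)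
    thus ?thesis using False F1 by (simp add: pw_eq push_def Let_def)
  qed
qed

lemma pw_period: "pw c v (m + c) = pw c v m" by (simp add: pw_eq)

lemma sum_shift_periodic:
  fixes g :: "nat \<Rightarrow> 'a::ab_group_add"
  assumes "\<And>m. g (m + c) = g m"
  shows "(\<Sum>k<c. g (j + k)) = (\<Sum>k<c. g k)"
proof (induction j)
  case 0 show ?case by simp
next
  case (Suc j)
  have "(\<Sum>k<Suc c. g (j + k)) = g (j + 0) + (\<Sum>k<c. g (j + Suc k))"
    by (rule sum.lessThan_Suc_shift)
  moreover have "(\<Sum>k<Suc c. g (j + k)) = (\<Sum>k<c. g (j + k)) + g (j + c)" by simp
  moreover have "g (j + c) = g j" using assms by simp
  ultimately have "(\<Sum>k<c. g (j + Suc k)) = (\<Sum>k<c. g (j + k))" by simp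
  thus ?case using Suc by simp
qed

lemma sum_reflect_periodic:
  fixes g :: "nat \<Rightarrow> 'a::ab_group_add"
  assumes "\<And>m. g (m + c) = g m"
  shows "(\<Sum>k<c. g (c - k)) = (\<Sum>k<c. g k)"
proof -
  have "(\<Sum>k<c. g (c - k)) = (\<Sum>k<c. (\<lambda>i. g (Suc i)) (c - Suc k))"
    by (rule sum.cong) (auto simp: Suc_diff_Suc)
  also have "\<dots> = (\<Sum>k<c. g (Suc k))" by (rule sum.nat_diff_reindex)
  also have "\<dots> = (\<Sum>k<c. g (1 + k))" by simp
  also have "\<dots> = (\<Sum>k<c. g k)" using sum_shift_periodic[of g c 1, OF assms] by simp
  finally show ?thesis .
qed

definition zeta :: "nat \<Rightarrow> complex" where "zeta c = inverse (omega c)"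

lemma zeta_pow_c: "1 \<le> c \<Longrightarrow> zeta c ^ c = 1"
  by (simp add: zeta_def power_inverse omega_pow_c)

lemma zeta_period: "1 \<le> c \<Longrightarrow> zeta c ^ (a * (m + c)) = zeta c ^ (a * m)"
  by (simp add: distrib_left power_add mult.commute[of a c] power_mult zeta_pow_c)

lemma upow_eq: "upow c v k = dl (pw c v k)"
  by (simp add: upow_def dl_def pw_def fun_eq_iff)

lemma eproj_eq: "eproj c v a = (\<lambda>w. \<Sum>k<c. (1 / of_nat c * zeta c ^ (a*k)) * dl (pw c v k) w)"
  by (simp add: eproj_def upow_eq zeta_def sum_distrib_left mult.assoc fun_eq_iff)

lemma supp_scale: "finite (supp f) \<Longrightarrow> finite (supp (\<lambda>w. a * f w))"
  by (rule finite_subset[of _ "supp f"]) (auto simp: supp_def)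

lemma supp_sum_fin: "finite I \<Longrightarrow> (\<And>i. i \<in> I \<Longrightarrow> finite (supp (f i))) \<Longrightarrow> finite (supp (\<lambda>w. \<Sum>i\<in>I. f i w))"
  by (rule finite_subset[OF supp_sum]) auto

lemma supp_E: "finite (supp (eproj c v a))"
  unfolding eproj_eq by (intro supp_sum_fin supp_scale supp_dl) auto

lemma conv_EE:
  assumes c: "1 \<le> c"
  shows "conv c (eproj c v a) (eproj c v a) = eproj c v a"
proof
  fix w
  define t where "t k = (\<lambda>w. (1 / of_nat c * zeta c ^ (a*k)) * dl (pw c v k) w)" for k
  define \<phi> where "\<phi> m = zeta c ^ (a * m) * dl (pw c v m) w" for m
  have per: "\<phi> (m + c) = \<phi> m" for m using zeta_period[OF c] pw_period unfolding \<phi>_def by metis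
  have E: "eproj c v a = (\<lambda>w. \<Sum>k<c. t k w)" unfolding eproj_eq t_def ..
  have ft: "finite (supp (t k))" for k unfolding t_def by (intro supp_scale supp_dl)
  have "conv c (eproj c v a) (eproj c v a) w = (\<Sum>j<c. \<Sum>k<c. conv c (t j) (t k) w)"
    unfolding E by (rule conv_bilin) (auto simp: ft)
  also have "\<dots> = (\<Sum>j<c. \<Sum>k<c. (1 / of_nat c)^2 * \<phi> (j + k))"
  proof (intro sum.cong refl)
    fix j k
    show "conv c (t j) (t k) w = (1 / of_nat c)^2 * \<phi> (j + k)"
      unfolding t_def
      by (subst conv_scale[OF supp_dl supp_dl]) 
         (simp add: conv_dl mulw_pw push_pw \<phi>_def power2_eq_square power_add algebra_simps)
  qed
  also have "\<dots> = (\<Sum>j<c. (1 / of_nat c)^2 * (\<Sum>k<c. \<phi> k))"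
    by (simp add: sum_distrib_left[symmetric] sum_shift_periodic[where g=\<phi>, OF per])
  also have "\<dots> = 1 / of_nat c * (\<Sum>k<c. \<phi> k)"
    using c by (simp add: power2_eq_square)
  also have "\<dots> = eproj c v a w"
    unfolding eproj_eq \<phi>_def by (simp add: sum_distrib_left mult.assoc)
  finally show "conv c (eproj c v a) (eproj c v a) w = eproj c v a w" .
qed

lemma invw_nil: "(invw c w = []) = (w = [])" by (simp add: invw_def)

lemma invw_single: "0 < k \<Longrightarrow> k < c \<Longrightarrow> (invw c w = [(v,k)]) = (w = [(v, c - k)])"
proof (cases w)
  case Nil thus ?thesis by (simp add: invw_def)
next
  case (Cons x xs)
  obtain v' k' where x: "x = (v',k')" by fastforce
  assume k: "0 < k" "k < c"
  show ?thesis using k by (cases xs) (auto simp: invw_def Cons x)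
qed

lemma invw_pw: "k < c \<Longrightarrow> (invw c w = pw c v k) = (w = pw c v (c - k))"
proof (cases "k = 0")
  case True thus ?thesis by (simp add: pw_eq invw_nil)
next
  case False
  assume "k < c"
  then have "pw c v k = [(v,k)]" "pw c v (c - k) = [(v, c - k)]" using False by (simp_all add: pw_eq)
  thus ?thesis using invw_single[of k c w v] False \<open>k < c\<close> by simp
qed

lemma cnj_zeta: "cnj (zeta c) = omega c"
  by (simp add: zeta_def cnj_omega complex_cnj_inverse)

lemma cnj_zeta_pow:
  assumes c: "1 \<le> c" and k: "k \<le> c"
  shows "cnj (zeta c ^ (a*k)) = zeta c ^ (a*(c-k))"
proof -
  have z0: "zeta c ^ (a*k) \<noteq> 0" by (simp add: zeta_def omega_ne0)
  have 1: "zeta c ^ (a*(c-k)) * zeta c ^ (a*k) = 1"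
  proof -
    have "zeta c ^ (a*(c-k)) * zeta c ^ (a*k) = zeta c ^ (a*(c-k) + a*k)" by (simp add: power_add)
    also have "a*(c-k) + a*k = c * a" using k by (simp add: algebra_simps diff_mult_distrib2)
    finally show ?thesis by (simp add: power_mult zeta_pow_c[OF c])
  qed
  have cz: "cnj (zeta c) * zeta c = 1" unfolding cnj_zeta by (simp add: zeta_def omega_ne0)
  have 2: "cnj (zeta c ^ (a*k)) * zeta c ^ (a*k) = 1"
    by (metis complex_cnj_power power_mult_distrib power_one cz)
  from 1 2 z0 show ?thesis by (metis mult_right_cancel)
qed

lemma cnj_zeta_pow':
  "1 \<le> c \<Longrightarrow> k \<le> c \<Longrightarrow> cnj (zeta c) ^ (a*k) = zeta c ^ (a*(c-k))"
  by (metis cnj_zeta_pow complex_cnj_power)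

lemma star_E:
  assumes c: "1 \<le> c"
  shows "cnj (eproj c v a (invw c w)) = eproj c v a w"
proof -
  define \<phi> where "\<phi> m = zeta c ^ (a * m) * dl (pw c v m) w" for m
  have per: "\<phi> (m + c) = \<phi> m" for m using zeta_period[OF c] pw_period unfolding \<phi>_def by metis
  have "cnj (eproj c v a (invw c w)) = (\<Sum>k<c. 1 / of_nat c * \<phi> (c - k))"
    unfolding eproj_eq
    by (auto simp: \<phi>_def dl_def invw_pw cnj_zeta_pow'[OF c] intro!: sum.cong)
  also have "\<dots> = 1 / of_nat c * (\<Sum>k<c. \<phi> (c - k))" by (simp add: sum_distrib_left)
  also have "\<dots> = 1 / of_nat c * (\<Sum>k<c. \<phi> k)" by (simp add: sum_reflect_periodic[where g=\<phi>, OF per])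
  also have "\<dots> = eproj c v a w" unfolding eproj_eq \<phi>_def by (simp add: sum_distrib_left mult.assoc)
  finally show ?thesis .
qed

lemma geo_zeta:
  assumes c: "1 \<le> c" and k: "k < c"
  shows "(\<Sum>a<c. (zeta c ^ k) ^ a) = (if k = 0 then of_nat c else 0)"
proof (cases "k = 0")
  case True thus ?thesis by simp
next
  case False
  have ne: "zeta c ^ k \<noteq> 1"
    using omega_pow_ne1[of k c] False k by (simp add: zeta_def power_inverse)
  have "(zeta c ^ k) ^ c = 1" by (metis power_mult mult.commute power_one zeta_pow_c[OF c])
  thus ?thesis using ne False by (simp add: sum_gp_strict)
qed

lemma sum_E:
  assumes c: "1 \<le> c"
  shows "(\<Sum>a<c. eproj c v a w) = one_el w"
proof -
  have "(\<Sum>a<c. eproj c v a w) = (\<Sum>a<c. \<Sum>k<c. 1 / of_nat c * dl (pw c v k) w * (zeta c ^ k) ^ a)"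
    unfolding eproj_eq by (simp add: power_mult[symmetric] mult.commute mult.left_commute)
  also have "\<dots> = (\<Sum>k<c. 1 / of_nat c * dl (pw c v k) w * (\<Sum>a<c. (zeta c ^ k) ^ a))"
    by (subst sum.swap) (simp add: sum_distrib_left)
  also have "\<dots> = (\<Sum>k<c. if k = 0 then dl (pw c v 0) w else 0)"
    using c by (intro sum.cong refl) (simp add: geo_zeta)
  also have "\<dots> = dl (pw c v 0) w" using c by simp
  also have "\<dots> = one_el w" by (simp add: dl_def one_el_def pw_eq)
  finally show ?thesis .
qed

lemma Ideal_add: "x \<in> Ideal n c \<Longrightarrow> y \<in> Ideal n c \<Longrightarrow> add_el x y \<in> Ideal n c"
  unfolding Ideal_def is_star_ideal_def by blast
lemma Ideal_smul: "x \<in> Ideal n c \<Longrightarrow> smul_el a x \<in> Ideal n c"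
  unfolding Ideal_def is_star_ideal_def by blast
lemma Ideal_zero: "zero_el \<in> Ideal n c"
  unfolding Ideal_def is_star_ideal_def by blast
lemma gens_Ideal: "x \<in> gens n c \<Longrightarrow> x \<in> Ideal n c"
  unfolding Ideal_def by blast

lemma Ideal_sum: "finite S \<Longrightarrow> (\<And>s. s \<in> S \<Longrightarrow> f s \<in> Ideal n c) \<Longrightarrow> (\<lambda>w. \<Sum>s\<in>S. f s w) \<in> Ideal n c"
proof (induction S rule: finite_induct)
  case empty
  then show ?case using Ideal_zero by (simp add: zero_el_def)
next
  case (insert x F)
  have "(\<lambda>w. \<Sum>s\<in>insert x F. f s w) = add_el (f x) (\<lambda>w. \<Sum>s\<in>F. f s w)"
    using insert by (simp add: add_el_def)
  then show ?case using insert Ideal_add by simp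
qed

lemma Pcone_sum:
  fixes m :: nat
  shows "(\<And>a. a < m \<Longrightarrow> F a \<in> GA n c) \<Longrightarrow>
   (\<lambda>w. \<Sum>a<m. conv c (star c (F a)) (F a) w) \<in> Pcone n c"
proof (induction m)
  case 0 thus ?case using Pcone.Pzero by (simp add: zero_el_def)
next
  case (Suc m)
  have "(\<lambda>w. \<Sum>a<Suc m. conv c (star c (F a)) (F a) w) =
        add_el (\<lambda>w. \<Sum>a<m. conv c (star c (F a)) (F a) w) (conv c (star c (F m)) (F m))"
    by (simp add: add_el_def)
  thus ?case using Suc Pcone.Padd by simp
qed

lemma supp_one: "finite (supp one_el)"
  using supp_dl[of "[]"] by (simp add: dl_def one_el_def[abs_def])

lemma conv_one_left:
  assumes fs: "finite (supp f)"
  shows "conv c one_el f w = f w"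
proof -
  have one1: "one_el [] = 1" unfolding one_el_def by simp
  have s1: "supp one_el \<subseteq> {[]}" by (auto simp: supp_def one_el_def split: if_splits)
  have "conv c one_el f w = (\<Sum>x\<in>{[]}. \<Sum>y\<in>supp f. if mulw c x y = w then one_el x * f y else 0)"
    by (rule conv_sup[OF finite.insertI[OF finite.emptyI] fs s1 order_refl])
  also have "\<dots> = (\<Sum>y\<in>supp f. if y = w then f y else 0)"
    unfolding one_el_def by (simp add: mulw_nil cong: if_cong)
  also have "\<dots> = (if w \<in> supp f then f w else 0)" by (rule sum.delta[OF fs])
  also have "\<dots> = f w" by (simp add: supp_def)
  finally show ?thesis .
qed

lemma supp_E_sub: "supp (eproj c v a) \<subseteq> pw c v ` {..<c}"
proof
  fix w assume "w \<in> supp (eproj c v a)"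
  hence "(\<Sum>k<c. (1 / of_nat c * zeta c ^ (a*k)) * dl (pw c v k) w) \<noteq> 0"
    unfolding supp_def eproj_eq by simp
  then obtain k where "k \<in> {..<c}" "(1 / of_nat c * zeta c ^ (a*k)) * dl (pw c v k) w \<noteq> 0"
    by (rule sum.not_neutral_contains_not_neutral)
  hence "k < c" "dl (pw c v k) w \<noteq> 0" by auto
  hence "w = pw c v k" unfolding dl_def by (simp split: if_splits)
  thus "w \<in> pw c v ` {..<c}" using \<open>k < c\<close> by blast
qed

lemma mulw_pw_nil: "mulw c (pw c v k) [] = pw c v k" using mulw_pw[of c v k "[]"] by (simp add: pw_def)

lemma q1: "supp one_el \<subseteq> {[]}" by (auto simp: supp_def one_el_def split: if_splits)
lemma q2: "conv c (eproj c v a) one_el w =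
     (\<Sum>x\<in>pw c v ` {..<c}. \<Sum>y\<in>{[]}. if mulw c x y = w then eproj c v a x * one_el y else 0)"
    by (rule conv_sup[OF finite_imageI[OF finite_lessThan] finite.insertI[OF finite.emptyI] supp_E_sub q1])
lemma q3: "(\<Sum>x\<in>pw c v ` {..<c}. if x = w then eproj c v a x else 0) = (if w \<in> pw c v ` {..<c} then eproj c v a w else 0)"
    by (rule sum.delta[OF finite_imageI[OF finite_lessThan]])
lemma q4: "x \<in> pw c v ` {..<c} \<Longrightarrow> (\<Sum>y\<in>{[]}. if mulw c x y = w then eproj c v a x * one_el y else 0) = (if x = w then eproj c v a x else 0)"
proof -
    assume "x \<in> pw c v ` {..<c}"
    then obtain k where "x = pw c v k" by blast
    hence "mulw c x [] = x" by (simp only: mulw_pw_nil)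
    thus ?thesis
      by (simp add: one_el_def)
qed
lemma q5: "(if w \<in> pw c v ` {..<c} then eproj c v a w else 0) = eproj c v a w"
  proof (cases "w \<in> pw c v ` {..<c}")
    case False
    have "w \<notin> supp (eproj c v a)" by (rule contra_subsetD[OF supp_E_sub False])
    hence "eproj c v a w = 0" unfolding supp_def by simp
    thus ?thesis using if_not_P[OF False, of "eproj c v a w" 0] by simp
  next
    case True show ?thesis using True by (rule if_P)
  qed

lemma conv_one_right_E: "conv c (eproj c v a) one_el w = eproj c v a w"
proof -
  have "conv c (eproj c v a) one_el w =
     (\<Sum>x\<in>pw c v ` {..<c}. \<Sum>y\<in>{[]}. if mulw c x y = w then eproj c v a x * one_el y else 0)"
    by (rule q2)
  also have "\<dots> = (\<Sum>x\<in>pw c v ` {..<c}. if x = w then eproj c v a x else 0)"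
    by (rule sum.cong[OF refl]) (rule q4)
  also have "\<dots> = (if w \<in> pw c v ` {..<c} then eproj c v a w else 0)" by (rule q3)
  also have "\<dots> = eproj c v a w" by (rule q5)
  finally show ?thesis .
qed

definition gF :: "nat \<Rightarrow> nat \<Rightarrow> nat \<Rightarrow> elem" where
  "gF c a i = (if i = 0 then one_el else eproj c (i - 1) a)"
definition cF :: "complex \<Rightarrow> nat \<Rightarrow> complex" where
  "cF r i = (if i = 0 then r else - r)"
definition Fa :: "nat \<Rightarrow> nat \<Rightarrow> complex \<Rightarrow> nat \<Rightarrow> elem" where
  "Fa n c r a = (\<lambda>w. \<Sum>i<Suc n. cF r i * gF c a i w)"

lemma supp_gF: "finite (supp (gF c a i))"
  by (simp add: gF_def supp_one supp_E)

lemma FF: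
  assumes c: "1 \<le> c"
  shows "conv c (Fa n c r a) (Fa n c r a) w = r * r * (one_el w - (\<Sum>v<n. eproj c v a w)
     + (\<Sum>v<n. \<Sum>u\<in>{..<n}-{v}. conv c (eproj c v a) (eproj c u a) w))"
proof -
  define T where "T i j = cF r i * cF r j * conv c (gF c a i) (gF c a j) w" for i j
  have "conv c (Fa n c r a) (Fa n c r a) w = (\<Sum>i<Suc n. \<Sum>j<Suc n. conv c (\<lambda>w. cF r i * gF c a i w) (\<lambda>w. cF r j * gF c a j w) w)"
    unfolding Fa_def by (rule conv_bilin) (auto intro: supp_scale supp_gF)
  also have "\<dots> = (\<Sum>i<Suc n. \<Sum>j<Suc n. T i j)"
    unfolding T_def by (intro sum.cong refl conv_scale supp_gF)
  also have "\<dots> = (\<Sum>j<Suc n. T 0 j) + (\<Sum>v<n. \<Sum>j<Suc n. T (Suc v) j)"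
    by (rule sum.lessThan_Suc_shift)
  also have "(\<Sum>j<Suc n. T 0 j) = r * r * one_el w - r * r * (\<Sum>v<n. eproj c v a w)"
  proof -
    have "(\<Sum>j<Suc n. T 0 j) = T 0 0 + (\<Sum>v<n. T 0 (Suc v))" by (rule sum.lessThan_Suc_shift)
    also have "T 0 0 = r * r * one_el w"
      unfolding T_def by (simp add: gF_def cF_def conv_one_left supp_one)
    also have "(\<Sum>v<n. T 0 (Suc v)) = (\<Sum>v<n. - (r * r) * eproj c v a w)"
      unfolding T_def by (intro sum.cong refl) (simp add: gF_def cF_def conv_one_left supp_E)
    finally show ?thesis by (simp add: sum_distrib_left sum_negf)
  qed
  also have "(\<Sum>v<n. \<Sum>j<Suc n. T (Suc v) j) =
      (\<Sum>v<n. r * r * (\<Sum>u\<in>{..<n}-{v}. conv c (eproj c v a) (eproj c u a) w))"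
  proof (intro sum.cong refl)
    fix v assume v: "v \<in> {..<n}"
    have "(\<Sum>j<Suc n. T (Suc v) j) = T (Suc v) 0 + (\<Sum>u<n. T (Suc v) (Suc u))"
      by (rule sum.lessThan_Suc_shift)
    also have "T (Suc v) 0 = - (r * r) * eproj c v a w"
      unfolding T_def by (simp add: gF_def cF_def conv_one_right_E)
    also have "(\<Sum>u<n. T (Suc v) (Suc u)) = r * r * (\<Sum>u<n. conv c (eproj c v a) (eproj c u a) w)"
      unfolding T_def by (simp add: gF_def cF_def sum_distrib_left)
    also have "(\<Sum>u<n. conv c (eproj c v a) (eproj c u a) w) =
        conv c (eproj c v a) (eproj c v a) w + (\<Sum>u\<in>{..<n}-{v}. conv c (eproj c v a) (eproj c u a) w)"
      using v by (simp add: sum.remove)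
    also have "conv c (eproj c v a) (eproj c v a) w = eproj c v a w" by (simp add: conv_EE[OF c])
    finally show "(\<Sum>j<Suc n. T (Suc v) j) = r * r * (\<Sum>u\<in>{..<n}-{v}. conv c (eproj c v a) (eproj c u a) w)"
      by (simp add: algebra_simps)
  qed
  finally show ?thesis by (simp add: algebra_simps sum_distrib_left)
qed

lemma star_Fa:
  assumes c: "1 \<le> c" and r: "cnj r = r"
  shows "star c (Fa n c r a) = Fa n c r a"
proof
  fix w
  have g: "cnj (gF c a i (invw c w)) = gF c a i w" for i
    by (cases "i = 0") (simp_all add: gF_def one_el_def invw_nil star_E[OF c])
  have cr: "cnj (cF r i) = cF r i" for i by (simp add: cF_def r)
  show "star c (Fa n c r a) w = Fa n c r a w"
    unfolding star_def Fa_def by (simp add: g cr)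
qed

lemma reduced_nil: "Defs.reduced n c []" by (simp add: Defs.reduced_def)

lemma reduced_pw: "1 \<le> c \<Longrightarrow> v < n \<Longrightarrow> Defs.reduced n c (pw c v k)"
  by (auto simp: pw_eq Defs.reduced_def)

lemma Fa_GA:
  assumes c: "1 \<le> c"
  shows "Fa n c r a \<in> GA n c"
proof -
  define W where "W = insert [] ((\<lambda>(v,k). pw c v k) ` ({..<n} \<times> {..<c}))"
  have sub: "w \<in> W" if nz: "Fa n c r a w \<noteq> 0" for w
  proof -
    from nz obtain i where i: "i \<in> {..<Suc n}" "cF r i * gF c a i w \<noteq> 0"
      unfolding Fa_def by (rule sum.not_neutral_contains_not_neutral)
    show ?thesis
    proof (cases "i = 0")
      case True
      with i have "one_el w \<noteq> 0" by (simp add: gF_def)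
      hence "w = []" unfolding one_el_def by (simp split: if_splits)
      thus ?thesis unfolding W_def by simp
    next
      case False
      with i have "eproj c (i - 1) a w \<noteq> 0" by (simp add: gF_def)
      hence "w \<in> supp (eproj c (i - 1) a)" by (simp add: supp_def)
      with supp_E_sub obtain k where "k < c" "w = pw c (i - 1) k" by blast
      moreover have "i - 1 < n" using i False by auto
      ultimately show ?thesis unfolding W_def by force
    qed
  qed
  have fW: "finite W" unfolding W_def by simp
  have rW: "Defs.reduced n c w" if "w \<in> W" for w
    using that c unfolding W_def by (auto simp: reduced_nil reduced_pw)
  show ?thesis unfolding GA_def
    using sub rW finite_subset[OF _ fW, of "{w. Fa n c r a w \<noteq> 0}"] by blast
qed

theorem mainTheorem13:
  fixes n c :: nat
  assumes "1 \<le> c"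
    and "A_nonzero n c"
    and "qclass n c (neg_el one_el) \<notin> Aplus n c"
  shows "n \<le> c"
proof (rule ccontr)
  assume "\<not> n \<le> c"
  hence nc: "c < n" by simp
  have c: "1 \<le> c" by (rule assms(1))
  define d where "d = real n - real c"
  have d: "d > 0" using nc unfolding d_def by simp
  define r where "r = complex_of_real (1 / sqrt d)"
  have rr: "r * r = complex_of_real (1 / d)"
    unfolding r_def using d by (simp flip: of_real_mult add: real_sqrt_mult[symmetric])
  have cr: "cnj r = r" unfolding r_def by simp
  define E where "E v a = eproj c v a" for v a
  define G where "G a w = (\<Sum>v<n. \<Sum>u\<in>{..<n}-{v}. conv c (eproj c v a) (eproj c u a) w)" for a w
  define p where "p = (\<lambda>w. \<Sum>a<c. conv c (star c (Fa n c r a)) (Fa n c r a) w)"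
  have pP: "p \<in> Pcone n c" unfolding p_def by (rule Pcone_sum) (rule Fa_GA[OF c])
  have pw_eq2: "p w = (\<Sum>a<c. r * r * (one_el w - (\<Sum>v<n. eproj c v a w) + G a w))" for w
    unfolding p_def G_def by (simp add: star_Fa[OF c cr] FF[OF c])
  have Qs: "(\<Sum>a<c. \<Sum>v<n. eproj c v a w) = of_nat n * one_el w" for w
  proof -
    have "(\<Sum>a<c. \<Sum>v<n. eproj c v a w) = (\<Sum>v<n. \<Sum>a<c. eproj c v a w)" by (rule sum.swap)
    also have "\<dots> = (\<Sum>v<n. one_el w)" by (simp add: sum_E[OF c])
    finally show ?thesis by simp
  qed
  have key: "add_el p one_el = smul_el (r * r) (\<lambda>w. \<Sum>a<c. G a w)"
  proof
    fix w
    have "add_el p one_el w = r * r * (of_nat c * one_el w - of_nat n * one_el w + (\<Sum>a<c. G a w)) + one_el w"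
      unfolding add_el_def pw_eq2 by (simp add: sum_distrib_left[symmetric] sum.distrib sum_subtractf Qs)
    also have "\<dots> = r * r * (\<Sum>a<c. G a w) + (r * r * (of_nat c - of_nat n) + 1) * one_el w"
      by (simp add: algebra_simps)
    also have "r * r * (of_nat c - of_nat n) + 1 = 0"
    proof -
      have "r * r * (of_nat c - of_nat n) = complex_of_real (1 / d * (real c - real n))"
        unfolding rr by simp
      also have "1 / d * (real c - real n) = -1" unfolding d_def using d d_def by (simp add: field_simps)
      finally show ?thesis by simp
    qed
    finally show "add_el p one_el w = smul_el (r * r) (\<lambda>w. \<Sum>a<c. G a w) w"
      by (simp add: smul_el_def)
  qed
  have GI: "(\<lambda>w. \<Sum>a<c. G a w) \<in> Ideal n c"
  proof (rule Ideal_sum)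
    fix a assume a: "a \<in> {..<c}"
    show "G a \<in> Ideal n c" unfolding G_def
    proof (rule Ideal_sum)
      fix v assume v: "v \<in> {..<n}"
      show "(\<lambda>w. \<Sum>u\<in>{..<n}-{v}. conv c (eproj c v a) (eproj c u a) w) \<in> Ideal n c"
      proof (rule Ideal_sum)
        fix u assume u: "u \<in> {..<n}-{v}"
        have "conv c (eproj c v a) (eproj c u a) \<in> gens n c"
          unfolding gens_def using a v u by blast
        thus "conv c (eproj c v a) (eproj c u a) \<in> Ideal n c" by (rule gens_Ideal)
      qed simp
    qed simp
  qed simp
  have X: "add_el p one_el \<in> Ideal n c" unfolding key by (rule Ideal_smul[OF GI])
  have "qclass n c (neg_el one_el) = qclass n c p"
  proof -
    have "add_el y (neg_el (neg_el one_el)) \<in> Ideal n c \<longleftrightarrow> add_el y (neg_el p) \<in> Ideal n c" for y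
    proof
      assume h: "add_el y (neg_el (neg_el one_el)) \<in> Ideal n c"
      have "add_el y (neg_el p) = add_el (add_el y (neg_el (neg_el one_el))) (smul_el (-1) (add_el p one_el))"
        by (simp add: add_el_def neg_el_def smul_el_def fun_eq_iff)
      thus "add_el y (neg_el p) \<in> Ideal n c" using h X Ideal_add Ideal_smul by metis
    next
      assume h: "add_el y (neg_el p) \<in> Ideal n c"
      have "add_el y (neg_el (neg_el one_el)) = add_el (add_el y (neg_el p)) (add_el p one_el)"
        by (simp add: add_el_def neg_el_def fun_eq_iff)
      thus "add_el y (neg_el (neg_el one_el)) \<in> Ideal n c" using h X Ideal_add by metis
    qed
    thus ?thesis unfolding qclass_def by blast
  qed
  hence "qclass n c (neg_el one_el) \<in> Aplus n c" unfolding Aplus_def using pP by blast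
  with assms(3) show False by simp
qed

end
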